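(* For every 3-periodic of the elliptic billiard, the interior angles $\theta_i'$ of its outer triangle satisfy $$\sum_{i=1}^3\cos(2\theta_i')=\frac{(a^2+b^2)(a^2+b^2-2\delta)}{c^4}=3-JL,\qquad \delta=\sqrt{a^4-a^2b^2+b^4}.$$
   Context: The elliptic billiard is $\mathcal{E}: x^2/a^2+y^2/b^2=1$, $a>b>0$, $c=\sqrt{a^2-b^2}$. A 3-periodic is a triangle $P_1P_2P_3$ inscribed in $\mathcal{E}$ that is a closed billiard trajectory (at each vertex the normal to $\mathcal{E}$ bisects the angle between the two incident sides). Its outer triangle has as sides the tangent lines to $\mathcal{E}$ at $P_1,P_2,P_3$. $L$ is the perimeter (the same for all 3-periodics), $J$ is Joachimsthal's constant $J=\frac12\nabla f(P_i)\cdot\hat v>0$ ($f=x^2/a^2+y^2/b^2$, $\hat v$ unit direction of the trajectory at $P_i$); explicitly $J=\sqrt{2\delta-a^2-b^2}/c^2$ and $L=2(\delta+a^2+b^2)J$. *)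

theory Defs
  imports Complex_Main
begin

type_synonym point = "real \<times> real"

definition vec_angle :: "point \<Rightarrow> point \<Rightarrow> real" where
  "vec_angle u v = arccos ((fst u * fst v + snd u * snd v) /
      (sqrt ((fst u)^2 + (snd u)^2) * sqrt ((fst v)^2 + (snd v)^2)))"

definition on_ellipse :: "real \<Rightarrow> real \<Rightarrow> point \<Rightarrow> bool" where
  "on_ellipse a b P \<longleftrightarrow> (fst P)^2 / a^2 + (snd P)^2 / b^2 = 1"

definition ell_normal :: "real \<Rightarrow> real \<Rightarrow> point \<Rightarrow> point" where
  "ell_normal a b P = (fst P / a^2, snd P / b^2)"

definition vsub :: "point \<Rightarrow> point \<Rightarrow> point" where
  "vsub Q P = (fst Q - fst P, snd Q - snd P)"

definition reflects_at :: "real \<Rightarrow> real \<Rightarrow> point \<Rightarrow> point \<Rightarrow> point \<Rightarrow> bool" where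
  "reflects_at a b Q P R \<longleftrightarrow>
     vec_angle (vsub Q P) (ell_normal a b P) = vec_angle (vsub R P) (ell_normal a b P)"

definition three_periodic :: "real \<Rightarrow> real \<Rightarrow> point \<Rightarrow> point \<Rightarrow> point \<Rightarrow> bool" where
  "three_periodic a b P1 P2 P3 \<longleftrightarrow>
     P1 \<noteq> P2 \<and> P2 \<noteq> P3 \<and> P3 \<noteq> P1 \<and>
     on_ellipse a b P1 \<and> on_ellipse a b P2 \<and> on_ellipse a b P3 \<and>
     reflects_at a b P3 P1 P2 \<and> reflects_at a b P1 P2 P3 \<and> reflects_at a b P2 P3 P1"

definition tangent_line :: "real \<Rightarrow> real \<Rightarrow> point \<Rightarrow> point set" where
  "tangent_line a b P = {X. fst X * fst P / a^2 + snd X * snd P / b^2 = 1}"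

definition outer_vertex :: "real \<Rightarrow> real \<Rightarrow> point \<Rightarrow> point \<Rightarrow> point" where
  "outer_vertex a b P Q = (THE X. X \<in> tangent_line a b P \<and> X \<in> tangent_line a b Q)"

definition delta_const :: "real \<Rightarrow> real \<Rightarrow> real" where
  "delta_const a b = sqrt (a^4 - a^2 * b^2 + b^4)"

definition joach_J :: "real \<Rightarrow> real \<Rightarrow> real" where
  "joach_J a b = sqrt (2 * delta_const a b - a^2 - b^2) / (a^2 - b^2)"

definition perim_L :: "real \<Rightarrow> real \<Rightarrow> real" where
  "perim_L a b = 2 * (delta_const a b + a^2 + b^2) * joach_J a b"

end

theory Submission
  imports Defs
begin

lemma cs_ineq:
  fixes u1 u2 v1 v2 :: real
  shows "\<bar>u1*v1+u2*v2\<bar> \<le> sqrt (u1^2+u2^2) * sqrt (v1^2+v2^2)"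
proof -
  have "(u1^2+u2^2)*(v1^2+v2^2) - (u1*v1+u2*v2)^2 = (u1*v2-u2*v1)^2" by algebra
  hence "(u1*v1+u2*v2)^2 \<le> (u1^2+u2^2)*(v1^2+v2^2)"
    using zero_le_power2[of "u1*v2-u2*v1"] by linarith
  hence "sqrt ((u1*v1+u2*v2)^2) \<le> sqrt ((u1^2+u2^2)*(v1^2+v2^2))"
    using real_sqrt_le_mono by blast
  thus ?thesis by (simp add: real_sqrt_mult)
qed

lemma cos_vec_angle:
  "cos (vec_angle u v) = (fst u * fst v + snd u * snd v) /
      (sqrt ((fst u)^2 + (snd u)^2) * sqrt ((fst v)^2 + (snd v)^2))"
proof -
  define d where "d = sqrt ((fst u)^2 + (snd u)^2) * sqrt ((fst v)^2 + (snd v)^2)"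
  define t where "t = fst u * fst v + snd u * snd v"
  have le: "\<bar>t\<bar> \<le> d" unfolding t_def d_def by (rule cs_ineq)
  have "\<bar>t / d\<bar> \<le> 1"
  proof (cases "d = 0")
    case True thus ?thesis by simp
  next
    case False
    hence "d > 0" using le by linarith
    thus ?thesis using le by (simp add: abs_divide divide_le_eq)
  qed
  thus ?thesis unfolding vec_angle_def t_def d_def by (simp add: cos_arccos_abs)
qed

lemma cos2_vec_angle:
  "cos (2 * vec_angle u v) = 2 * ((fst u * fst v + snd u * snd v)^2 /
      (((fst u)^2 + (snd u)^2) * ((fst v)^2 + (snd v)^2))) - 1"
proof -
  have h1: "(sqrt ((fst u)^2 + (snd u)^2))^2 = (fst u)^2 + (snd u)^2" by simp
  have h2: "(sqrt ((fst v)^2 + (snd v)^2))^2 = (fst v)^2 + (snd v)^2" by simp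
  show ?thesis unfolding cos_double_cos cos_vec_angle
    by (simp add: power_divide power_mult_distrib h1 h2)
qed

lemma angle_poly:
  fixes p1 p2 q1 q2 v1 v2 w1 w2 :: real
  assumes "p1*v1+p2*v2=0" "q1*w1+q2*w2=0"
  shows "(p1^2+p2^2)*(q1^2+q2^2)*((v1*w1+v2*w2)^2*((p1^2+p2^2)*(q1^2+q2^2))) = (p1^2+p2^2)*(q1^2+q2^2)*((p1*q1+p2*q2)^2*((v1^2+v2^2)*(w1^2+w2^2)))"
  using assms by algebra

lemma angle_eq:
  fixes p1 p2 q1 q2 v1 v2 w1 w2 :: real
  assumes "p1*v1+p2*v2=0" "q1*w1+q2*w2=0" "p1^2+p2^2 \<noteq> 0" "q1^2+q2^2 \<noteq> 0"
    "v1^2+v2^2 \<noteq> 0" "w1^2+w2^2 \<noteq> 0"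
  shows "(v1*w1+v2*w2)^2/((v1^2+v2^2)*(w1^2+w2^2)) = (p1*q1+p2*q2)^2/((p1^2+p2^2)*(q1^2+q2^2))"
proof -
  have "(v1*w1+v2*w2)^2*((p1^2+p2^2)*(q1^2+q2^2)) = (p1*q1+p2*q2)^2*((v1^2+v2^2)*(w1^2+w2^2))"
  proof -
    have nz: "(p1^2+p2^2)*(q1^2+q2^2) \<noteq> 0" using assms(3,4) by simp
    show ?thesis using mult_left_cancel[OF nz] angle_poly[OF assms(1,2)] by blast
  qed
  moreover have "(v1^2+v2^2)*(w1^2+w2^2) \<noteq> 0" "(p1^2+p2^2)*(q1^2+q2^2) \<noteq> 0" using assms(3-6) by simp_all
  ultimately show ?thesis by (simp add: frac_eq_eq)
qed

definition mm :: "real \<Rightarrow> real \<Rightarrow> real \<Rightarrow> real \<Rightarrow> real" where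
  "mm X Y X' Y' = 1 - X*X' - Y*Y'"
definition DD :: "real \<Rightarrow> real \<Rightarrow> real \<Rightarrow> real \<Rightarrow> real \<Rightarrow> real \<Rightarrow> real" where
  "DD a b X Y X' Y' = (a^2+b^2) - (a^2-b^2)*(X*X'-Y*Y')"

lemma mm_sym: "mm X Y X' Y' = mm X' Y' X Y" unfolding mm_def by (simp add: algebra_simps)
lemma DD_sym: "DD a b X Y X' Y' = DD a b X' Y' X Y" unfolding DD_def by (simp add: algebra_simps)

lemma mm_pos:
  assumes "X^2+Y^2=1" "X'^2+Y'^2=1" "(X,Y) \<noteq> (X',Y')"
  shows "mm X Y X' Y' > 0"
proof -
  have e: "2 * mm X Y X' Y' = (X-X')^2+(Y-Y')^2"
    using assms(1,2) unfolding mm_def by algebra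
  have "(X-X')^2+(Y-Y')^2 > 0"
  proof (cases "X = X'")
    case True
    hence "Y \<noteq> Y'" using assms(3) by auto
    thus ?thesis by (simp add: add_nonneg_pos)
  next
    case False thus ?thesis by (simp add: add_pos_nonneg)
  qed
  thus ?thesis using e by linarith
qed

lemma DD_pos:
  assumes "a > b" "b > 0" "X^2+Y^2=1" "X'^2+Y'^2=1"
  shows "DD a b X Y X' Y' > 0"
proof -
  have "2 - 2*(X*X'-Y*Y') = (X-X')^2 + (Y+Y')^2" using assms(3,4) by algebra
  moreover have "0 \<le> (X-X')^2 + (Y+Y')^2" by simp
  ultimately have "0 \<le> 2 - 2*(X*X'-Y*Y')" by simp
  hence t: "X*X'-Y*Y' \<le> 1" by simp
  have c: "a^2-b^2 \<ge> 0" using assms(1,2) by (simp add: power_mono)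
  have "(a^2-b^2)*(X*X'-Y*Y') \<le> (a^2-b^2)*1" using mult_left_mono[OF t c] .
  moreover have "b^2 > 0" using assms(2) by simp
  moreover have "\<And>T::real. T \<le> (a^2-b^2)*1 \<Longrightarrow> 0 < b^2 \<Longrightarrow> 0 < a^2+b^2 - T" by (smt (verit))
  ultimately show ?thesis unfolding DD_def by blast
qed

lemma dist_id:
  fixes X Y X' Y' a b :: real
  assumes "X^2+Y^2=1" "X'^2+Y'^2=1"
  shows "(a*X'-a*X)^2+(b*Y'-b*Y)^2 = mm X Y X' Y' * DD a b X Y X' Y'"
  using assms unfolding mm_def DD_def by algebra

lemma ratio_form:
  assumes ab: "a > 0" "b > 0" and up: "Xp^2+Yp^2=1" and uq: "Xq^2+Yq^2=1"
    and mp: "mm Xp Yp Xq Yq > 0" and dp: "DD a b Xp Yp Xq Yq > 0"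
  shows "cos (vec_angle (vsub (a*Xq,b*Yq) (a*Xp,b*Yp)) (ell_normal a b (a*Xp,b*Yp)))
     = - sqrt (mm Xp Yp Xq Yq / DD a b Xp Yp Xq Yq) / sqrt ((Xp/a)^2+(Yp/b)^2)"
proof -
  define m where "m = mm Xp Yp Xq Yq"
  define D where "D = DD a b Xp Yp Xq Yq"
  have dot: "(a*Xq - a*Xp) * (a*Xp/a^2) + (b*Yq - b*Yp)*(b*Yp/b^2) = - m"
  proof -
    have "(a*Xq - a*Xp) * (a*Xp/a^2) + (b*Yq - b*Yp)*(b*Yp/b^2) = (Xq-Xp)*Xp + (Yq-Yp)*Yp"
      using ab by (simp add: power2_eq_square field_simps)
    also have "\<dots> = - m" unfolding m_def mm_def using up by algebra
    finally show ?thesis .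
  qed
  have nv: "(a*Xq - a*Xp)^2 + (b*Yq - b*Yp)^2 = m * D"
    unfolding m_def D_def using dist_id[OF up uq] by simp
  have nn: "(a*Xp/a^2)^2 + (b*Yp/b^2)^2 = (Xp/a)^2+(Yp/b)^2"
    using ab by (simp add: power2_eq_square field_simps)
  have mpos: "m > 0" and Dpos: "D > 0" using mp dp m_def D_def by auto
  have key: "m / sqrt (m*D) = sqrt (m/D)"
  proof -
    have "m / sqrt (m*D) = (m / sqrt m) / sqrt D" by (simp add: real_sqrt_mult)
    also have "m / sqrt m = sqrt m" using mpos by (simp add: real_div_sqrt)
    finally show ?thesis by (simp add: real_sqrt_divide)
  qed
  have "cos (vec_angle (vsub (a*Xq,b*Yq) (a*Xp,b*Yp)) (ell_normal a b (a*Xp,b*Yp)))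
      = - m / (sqrt (m*D) * sqrt ((Xp/a)^2+(Yp/b)^2))"
    unfolding cos_vec_angle vsub_def ell_normal_def using dot nv nn by simp
  also have "\<dots> = - (m / sqrt (m*D)) / sqrt ((Xp/a)^2+(Yp/b)^2)" by simp
  also have "\<dots> = - sqrt (m/D) / sqrt ((Xp/a)^2+(Yp/b)^2)" using key by simp
  finally show ?thesis unfolding m_def D_def .
qed

lemma refl_ratio:
  assumes ab: "a > b" "b > 0" and up: "Xp^2+Yp^2=1" and uq: "Xq^2+Yq^2=1" and ur: "Xr^2+Yr^2=1"
    and dq: "(Xq,Yq) \<noteq> (Xp,Yp)" and dr: "(Xr,Yr) \<noteq> (Xp,Yp)"
    and r: "reflects_at a b (a*Xq,b*Yq) (a*Xp,b*Yp) (a*Xr,b*Yr)"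
  shows "mm Xp Yp Xq Yq / DD a b Xp Yp Xq Yq = mm Xp Yp Xr Yr / DD a b Xp Yp Xr Yr"
proof -
  have a0: "a > 0" using ab by simp
  have mq: "mm Xp Yp Xq Yq > 0" using mm_pos[OF up uq] dq by auto
  have mr: "mm Xp Yp Xr Yr > 0" using mm_pos[OF up ur] dr by auto
  have Dq: "DD a b Xp Yp Xq Yq > 0" using DD_pos[OF ab up uq] .
  have Dr: "DD a b Xp Yp Xr Yr > 0" using DD_pos[OF ab up ur] .
  have "cos (vec_angle (vsub (a*Xq,b*Yq) (a*Xp,b*Yp)) (ell_normal a b (a*Xp,b*Yp)))
      = cos (vec_angle (vsub (a*Xr,b*Yr) (a*Xp,b*Yp)) (ell_normal a b (a*Xp,b*Yp)))"
    using r unfolding reflects_at_def by simp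
  hence eq: "- sqrt (mm Xp Yp Xq Yq / DD a b Xp Yp Xq Yq) / sqrt ((Xp/a)^2+(Yp/b)^2)
      = - sqrt (mm Xp Yp Xr Yr / DD a b Xp Yp Xr Yr) / sqrt ((Xp/a)^2+(Yp/b)^2)"
    using ratio_form[OF a0 ab(2) up uq mq Dq] ratio_form[OF a0 ab(2) up ur mr Dr] by simp
  have "(Xp/a)^2+(Yp/b)^2 > 0"
  proof (cases "Xp = 0")
    case True
    hence "Yp \<noteq> 0" using up by auto
    thus ?thesis using ab by (simp add: add_nonneg_pos)
  next
    case False thus ?thesis using a0 by (simp add: add_pos_nonneg)
  qed
  hence "0 < sqrt ((Xp/a)^2+(Yp/b)^2)" by (rule real_sqrt_gt_zero)
  hence np: "sqrt ((Xp/a)^2+(Yp/b)^2) \<noteq> 0" by linarith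
  have "- sqrt (mm Xp Yp Xq Yq / DD a b Xp Yp Xq Yq) = - sqrt (mm Xp Yp Xr Yr / DD a b Xp Yp Xr Yr)"
    using eq np by (metis divide_cancel_right)
  thus ?thesis by simp
qed


definition cz :: "real \<Rightarrow> real \<Rightarrow> complex" where
  "cz X Y = complex_of_real X + \<i> * complex_of_real Y"

lemma cz_Re [simp]: "Re (cz X Y) = X" and cz_Im [simp]: "Im (cz X Y) = Y"
  unfolding cz_def by simp_all

lemma cz_eq: "cz X Y = cz X' Y' \<Longrightarrow> (X,Y) = (X',Y')"
  by (metis cz_Re cz_Im)

lemma cz_norm: assumes "X^2+Y^2=1" shows "cmod (cz X Y) = 1"
proof -
  have "(cmod (cz X Y))^2 = 1" using assms by (simp add: cmod_power2)
  hence "cmod (cz X Y) = 1 \<or> cmod (cz X Y) = -1" by (simp add: power2_eq_1_iff)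
  thus ?thesis using norm_ge_zero[of "cz X Y"] by linarith
qed

lemma cz_nz: assumes "X^2+Y^2=1" shows "cz X Y \<noteq> 0"
  using cz_norm[OF assms] by auto

lemma Fz_real:
  fixes X Y X' Y' e K :: real
  assumes u: "X^2+Y^2=1" and u': "X'^2+Y'^2=1" and r: "X*X'+Y*Y' - e*(X*X'-Y*Y') - K = 0"
  shows "(cz X Y)^2 + (cz X' Y')^2 - of_real e * (cz X Y)^2 * (cz X' Y')^2
           - 2 * of_real K * cz X Y * cz X' Y' - of_real e = 0"
proof -
  have h1: "(complex_of_real X)^2 + (complex_of_real Y)^2 = 1"
    using arg_cong[OF u, of complex_of_real] by simp
  have h2: "(complex_of_real X')^2 + (complex_of_real Y')^2 = 1"
    using arg_cong[OF u', of complex_of_real] by simp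
  have h3: "complex_of_real X * of_real X' + of_real Y * of_real Y'
      - of_real e * (of_real X * of_real X' - of_real Y * of_real Y') - of_real K = 0"
    using arg_cong[OF r, of complex_of_real] by simp
  have i: "\<i>^2 = (-1::complex)" by simp
  show ?thesis unfolding cz_def using h1 h2 h3 i by algebra
qed

lemma CV_real:
  fixes X Y X' Y' a b s C :: real
  assumes u: "X^2+Y^2=1" and u': "X'^2+Y'^2=1" and sC: "s = a^2+b^2" "C = a^2-b^2"
  shows "4 * cz X Y * cz X' Y' * of_real (b^2*X*X' + a^2*Y*Y')
     = of_real s * ((cz X Y)^2 + (cz X' Y')^2) - of_real C * ((cz X Y)^2*(cz X' Y')^2 + 1)"
proof -
  have h1: "(complex_of_real X)^2 + (complex_of_real Y)^2 = 1"
    using arg_cong[OF u, of complex_of_real] by simp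
  have h2: "(complex_of_real X')^2 + (complex_of_real Y')^2 = 1"
    using arg_cong[OF u', of complex_of_real] by simp
  have i: "\<i>^2 = (-1::complex)" by simp
  have e1: "complex_of_real (b^2*X*X' + a^2*Y*Y') = (of_real b)^2*of_real X*of_real X' + (of_real a)^2*of_real Y*of_real Y'" by simp
  have e2: "complex_of_real s = (of_real a)^2+(of_real b)^2" using sC by simp
  have e3: "complex_of_real C = (of_real a)^2-(of_real b)^2" using sC by simp
  show ?thesis unfolding cz_def e1 e2 e3 using h1 h2 i by algebra
qed

lemma sq_real:
  fixes X Y X' Y' :: real
  assumes u: "X^2+Y^2=1" and u': "X'^2+Y'^2=1" and d: "X*Y'-X'*Y = 0"
  shows "(cz X Y)^2 = (cz X' Y')^2"
proof -
  have h1: "(complex_of_real X)^2 + (complex_of_real Y)^2 = 1"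
    using arg_cong[OF u, of complex_of_real] by simp
  have h2: "(complex_of_real X')^2 + (complex_of_real Y')^2 = 1"
    using arg_cong[OF u', of complex_of_real] by simp
  have h3: "complex_of_real X * of_real Y' - of_real X' * of_real Y = 0"
    using arg_cong[OF d, of complex_of_real] by simp
  have i: "\<i>^2 = (-1::complex)" by simp
  show ?thesis unfolding cz_def using h1 h2 h3 i by algebra
qed

lemma chain:
  fixes z1 z2 z3 e K :: complex
  assumes F12: "z1^2+z2^2 - e*z1^2*z2^2 - 2*K*z1*z2 - e = 0"
    and F13: "z1^2+z3^2 - e*z1^2*z3^2 - 2*K*z1*z3 - e = 0"
    and F23: "z2^2+z3^2 - e*z2^2*z3^2 - 2*K*z2*z3 - e = 0"
    and d: "z1\<noteq>z2" "z1\<noteq>z3" "z2\<noteq>z3" and nz: "z1 \<noteq> 0"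
  shows "z1+z2+z3 = -e*z1*z2*z3 \<and> z1*z2+z1*z3+z2*z3 = -e \<and> 2*K = e^2-1"
proof -
  have "(z2-z3)*((z2+z3)*(1-e*z1^2) - 2*K*z1) = 0" using F12 F13 by algebra
  hence "(z2+z3)*(1-e*z1^2) - 2*K*z1 = 0" using d by simp
  hence s1: "(z2+z3)*(1-e*z1^2) = 2*K*z1" by simp
  have "(z1-z3)*((z1+z3)*(1-e*z2^2) - 2*K*z2) = 0" using F12 F23 by algebra
  hence "(z1+z3)*(1-e*z2^2) - 2*K*z2 = 0" using d by simp
  hence s2: "(z1+z3)*(1-e*z2^2) = 2*K*z2" by simp
  have "(z1-z2)*((z1+z2)*(1-e*z3^2) - 2*K*z3) = 0" using F13 F23 by algebra
  hence "(z1+z2)*(1-e*z3^2) - 2*K*z3 = 0" using d by simp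
  hence s3: "(z1+z2)*(1-e*z3^2) = 2*K*z3" by simp
  have p1: "z2*z3*(1-e*z1^2) = z1^2-e" using F12 s1 by algebra
  have p2: "z1*z3*(1-e*z2^2) = z2^2-e" using F12 s2 by algebra
  have p3: "z1*z2*(1-e*z3^2) = z3^2-e" using F13 s3 by algebra
  define q where "q = z1*z2*z3"
  have H1: "z1^3 + e*q*z1^2 - e*z1 - q = 0" using p1 unfolding q_def by algebra
  have H2: "z2^3 + e*q*z2^2 - e*z2 - q = 0" using p2 unfolding q_def by algebra
  have H3: "z3^3 + e*q*z3^2 - e*z3 - q = 0" using p3 unfolding q_def by algebra
  have "(z1-z2)*(z1^2+z1*z2+z2^2 + e*q*(z1+z2) - e) = 0" using H1 H2 by algebra
  hence T12: "z1^2+z1*z2+z2^2 + e*q*(z1+z2) - e = 0" using d by simp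
  have "(z1-z3)*(z1^2+z1*z3+z3^2 + e*q*(z1+z3) - e) = 0" using H1 H3 by algebra
  hence T13: "z1^2+z1*z3+z3^2 + e*q*(z1+z3) - e = 0" using d by simp
  have "(z2-z3)*(z1+z2+z3+e*q) = 0" using T12 T13 by algebra
  hence "z1+z2+z3+e*q = 0" using d by simp
  hence S1: "z1+z2+z3 = -e*q" by (simp add: eq_neg_iff_add_eq_0)
  have S2: "z1*z2+z1*z3+z2*z3 = -e" using T12 S1 by algebra
  have "z1*(2*K - e^2 + 1) = 0" using s1 H1 S1 by algebra
  hence "2*K - e^2 + 1 = 0" using nz by simp
  hence "2*K = e^2-1" by (simp add: algebra_simps)
  thus ?thesis using S1 S2 unfolding q_def by (simp add: mult.assoc)
qed

definition NN :: "complex \<Rightarrow> complex \<Rightarrow> complex \<Rightarrow> complex \<Rightarrow> complex" where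
  "NN s C z w = s*(z^2+w^2) - C*(z^2*w^2+1)"
definition hh :: "complex \<Rightarrow> complex \<Rightarrow> complex \<Rightarrow> complex" where
  "hh s C z = 2*s*z^2 - C*(z^4+1)"

lemma fin:
  fixes z1 z2 z3 e s C :: complex
  assumes "z1+z2+z3 = -e*z1*z2*z3" "z1*z2+z1*z3+z2*z3 = -e" "2*e*s = C*(3-e^2)"
  shows "4*((NN s C z3 z2)^2*(hh s C z1) + (NN s C z1 z3)^2*(hh s C z2) + (NN s C z2 z1)^2*(hh s C z3))
     = (3+e^2)*(hh s C z1)*(hh s C z2)*(hh s C z3)"
  using assms unfolding NN_def hh_def by algebra

lemma conv:
  fixes zj zk n dj dk N hj hk :: complex
  assumes "4*zj*zk*n = N" "4*zj*zj*dj = hj" "4*zk*zk*dk = hk" "zj\<noteq>0" "zk\<noteq>0" "dj\<noteq>0" "dk\<noteq>0"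
  shows "n^2/(dj*dk) = N^2/(hj*hk)"
  using assms by (auto simp: field_simps power2_eq_square)

lemma anti:
  fixes z1 z2 z3 :: complex and e :: real
  assumes "z1+z2+z3 = - of_real e*z1*z2*z3" "z1 \<noteq> 0" "z3 = -z2" "cmod z2 = 1" "e > 0"
  shows "e = 1"
proof -
  have "z1 * (of_real e * z2^2 - 1) = 0" using assms(1,3) by algebra
  hence "of_real e * z2^2 = 1" using assms(2) by simp
  hence "cmod (of_real e * z2^2) = 1" by simp
  hence "\<bar>e\<bar> = 1" using assms(4) by (simp add: norm_mult norm_power)
  thus ?thesis using assms(5) by simp
qed

lemma tan_iff:
  assumes "a \<noteq> 0" "b \<noteq> 0"
  shows "(Z \<in> tangent_line a b (a*X,b*Y)) = (X*(fst Z/a) + Y*(snd Z/b) = 1)"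
proof -
  have "fst Z * (a*X) / a^2 + snd Z * (b*Y)/b^2 = X*(fst Z/a) + Y*(snd Z/b)"
    using assms by (simp add: power2_eq_square field_simps)
  thus ?thesis unfolding tangent_line_def by simp
qed

lemma outer:
  assumes ab: "a \<noteq> 0" "b \<noteq> 0" and dz: "X2*Y3 - X3*Y2 \<noteq> 0"
  defines "\<xi> \<equiv> (Y3-Y2)/(X2*Y3-X3*Y2)" and "\<eta> \<equiv> (X2-X3)/(X2*Y3-X3*Y2)"
  shows "outer_vertex a b (a*X2,b*Y2) (a*X3,b*Y3) = (a*\<xi>, b*\<eta>)"
    and "X2*\<xi> + Y2*\<eta> = 1" and "X3*\<xi> + Y3*\<eta> = 1"
proof -
  show l2: "X2*\<xi> + Y2*\<eta> = 1" unfolding \<xi>_def \<eta>_def using dz by (simp add: field_simps) algebra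
  show l3: "X3*\<xi> + Y3*\<eta> = 1" unfolding \<xi>_def \<eta>_def using dz by (simp add: field_simps) algebra
  show "outer_vertex a b (a*X2,b*Y2) (a*X3,b*Y3) = (a*\<xi>, b*\<eta>)"
    unfolding outer_vertex_def
  proof (rule the_equality)
    show "(a*\<xi>, b*\<eta>) \<in> tangent_line a b (a*X2,b*Y2) \<and> (a*\<xi>, b*\<eta>) \<in> tangent_line a b (a*X3,b*Y3)"
      using l2 l3 ab by (simp add: tan_iff)
  next
    fix Z assume "Z \<in> tangent_line a b (a*X2,b*Y2) \<and> Z \<in> tangent_line a b (a*X3,b*Y3)"
    hence e2: "X2*(fst Z/a) + Y2*(snd Z/b) = 1" and e3: "X3*(fst Z/a) + Y3*(snd Z/b) = 1"
      using ab by (simp_all add: tan_iff)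
    have "(fst Z/a)*(X2*Y3-X3*Y2) = Y3-Y2" using e2 e3 by algebra
    hence x: "fst Z/a = \<xi>" unfolding \<xi>_def using dz by (simp add: field_simps)
    have "(snd Z/b)*(X2*Y3-X3*Y2) = X2-X3" using e2 e3 by algebra
    hence y: "snd Z/b = \<eta>" unfolding \<eta>_def using dz by (simp add: field_simps)
    show "Z = (a*\<xi>, b*\<eta>)" using x y ab by (cases Z) (simp add: field_simps)
  qed
qed

lemma no_common:
  fixes X1 Y1 X2 Y2 X3 Y3 u v :: real
  assumes "X1^2+Y1^2=1" "X2^2+Y2^2=1" "X3^2+Y3^2=1"
    and "(X1,Y1)\<noteq>(X2,Y2)" "(X1,Y1)\<noteq>(X3,Y3)" "(X2,Y2)\<noteq>(X3,Y3)"
    and "X1*u+Y1*v=1" "X2*u+Y2*v=1" "X3*u+Y3*v=1"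
  shows False
proof -
  have "X1*(Y2-Y3) - Y1*(X2-X3) + (X2*Y3-X3*Y2) = 0" using assms(7-9) by algebra
  moreover have "4*(X1*(Y2-Y3) - Y1*(X2-X3) + (X2*Y3-X3*Y2))^2 = ((X1-X2)^2+(Y1-Y2)^2)*((X2-X3)^2+(Y2-Y3)^2)*((X3-X1)^2+(Y3-Y1)^2)"
    using assms(1-3) by algebra
  ultimately have "((X1-X2)^2+(Y1-Y2)^2)*((X2-X3)^2+(Y2-Y3)^2)*((X3-X1)^2+(Y3-Y1)^2) = 0" by simp
  hence "((X1-X2)^2+(Y1-Y2)^2) = 0 \<or> ((X2-X3)^2+(Y2-Y3)^2) = 0 \<or> ((X3-X1)^2+(Y3-Y1)^2) = 0" by simp
  thus False using assms(4-6) by (auto simp: sum_power2_eq_zero_iff)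
qed

lemma ratio_scale:
  fixes k N D1 D2 :: real
  assumes "k \<noteq> 0"
  shows "(N/k)^2/((D1/k)*(D2/k)) = N^2/(D1*D2)"
proof -
  have "(N/k)^2/((D1/k)*(D2/k)) = (N^2/k^2)/((D1*D2)/k^2)" by (simp add: power_divide power2_eq_square)
  also have "\<dots> = N^2/(D1*D2)" using assms by simp
  finally show ?thesis .
qed

lemma corner:
  fixes a b A B A' B' \<xi> \<eta> \<xi>' \<eta>' \<xi>'' \<eta>'' :: real
  assumes ab: "a > 0" "b > 0"
    and "A*\<xi> + B*\<eta> = 1" "A*\<xi>' + B*\<eta>' = 1"
    and "A'*\<xi> + B'*\<eta> = 1" "A'*\<xi>'' + B'*\<eta>'' = 1"
    and d1: "(\<xi>',\<eta>') \<noteq> (\<xi>,\<eta>)" and d2: "(\<xi>'',\<eta>'') \<noteq> (\<xi>,\<eta>)"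
    and u: "A^2+B^2=1" and u': "A'^2+B'^2=1"
  shows "cos (2 * vec_angle (vsub (a*\<xi>',b*\<eta>') (a*\<xi>,b*\<eta>)) (vsub (a*\<xi>'',b*\<eta>'') (a*\<xi>,b*\<eta>)))
     = 2 * ((b^2*A*A' + a^2*B*B')^2/((b^2*A^2+a^2*B^2)*(b^2*A'^2+a^2*B'^2))) - 1"
proof -
  define v1 where "v1 = a*\<xi>' - a*\<xi>"
  define v2 where "v2 = b*\<eta>' - b*\<eta>"
  define w1 where "w1 = a*\<xi>'' - a*\<xi>"
  define w2 where "w2 = b*\<eta>'' - b*\<eta>"
  have pv: "(A/a)*v1 + (B/b)*v2 = 0"
  proof -
    have "(A/a)*v1 + (B/b)*v2 = (A*\<xi>' + B*\<eta>') - (A*\<xi> + B*\<eta>)"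
      unfolding v1_def v2_def using ab by (simp add: field_simps)
    thus ?thesis using assms(3,4) by simp
  qed
  have qw: "(A'/a)*w1 + (B'/b)*w2 = 0"
  proof -
    have "(A'/a)*w1 + (B'/b)*w2 = (A'*\<xi>'' + B'*\<eta>'') - (A'*\<xi> + B'*\<eta>)"
      unfolding w1_def w2_def using ab by (simp add: field_simps)
    thus ?thesis using assms(5,6) by simp
  qed
  have nzp: "(A/a)^2+(B/b)^2 \<noteq> 0" using u ab by (auto simp: sum_power2_eq_zero_iff)
  have nzq: "(A'/a)^2+(B'/b)^2 \<noteq> 0" using u' ab by (auto simp: sum_power2_eq_zero_iff)
  have nzv: "v1^2+v2^2 \<noteq> 0" using d1 ab unfolding v1_def v2_def by (auto simp: sum_power2_eq_zero_iff)
  have nzw: "w1^2+w2^2 \<noteq> 0" using d2 ab unfolding w1_def w2_def by (auto simp: sum_power2_eq_zero_iff)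
  have "cos (2 * vec_angle (vsub (a*\<xi>',b*\<eta>') (a*\<xi>,b*\<eta>)) (vsub (a*\<xi>'',b*\<eta>'') (a*\<xi>,b*\<eta>)))
     = 2 * ((v1*w1+v2*w2)^2/((v1^2+v2^2)*(w1^2+w2^2))) - 1"
    unfolding cos2_vec_angle vsub_def v1_def v2_def w1_def w2_def by simp
  also have "(v1*w1+v2*w2)^2/((v1^2+v2^2)*(w1^2+w2^2)) = ((A/a)*(A'/a)+(B/b)*(B'/b))^2/(((A/a)^2+(B/b)^2)*((A'/a)^2+(B'/b)^2))"
    by (rule angle_eq[OF pv qw nzp nzq nzv nzw])
  also have "\<dots> = (b^2*A*A' + a^2*B*B')^2/((b^2*A^2+a^2*B^2)*(b^2*A'^2+a^2*B'^2))"
  proof -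
    have k: "a^2*b^2 \<noteq> 0" using ab by simp
    have r1: "(A/a)*(A'/a)+(B/b)*(B'/b) = (b^2*A*A' + a^2*B*B')/(a^2*b^2)"
      using ab by (simp add: field_simps power2_eq_square)
    have r2: "(A/a)^2+(B/b)^2 = (b^2*A^2+a^2*B^2)/(a^2*b^2)"
      using ab by (simp add: field_simps power2_eq_square)
    have r3: "(A'/a)^2+(B'/b)^2 = (b^2*A'^2+a^2*B'^2)/(a^2*b^2)"
      using ab by (simp add: field_simps power2_eq_square)
    show ?thesis unfolding r1 r2 r3 by (rule ratio_scale[OF k])
  qed
  finally show ?thesis .
qed


lemma ell_unit: "on_ellipse a b (a*X,b*Y) \<Longrightarrow> a \<noteq> 0 \<Longrightarrow> b \<noteq> 0 \<Longrightarrow> X^2+Y^2=1"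
  by (simp add: on_ellipse_def power_mult_distrib)

definition ccf :: "real \<Rightarrow> real \<Rightarrow> real \<Rightarrow> real \<Rightarrow> real \<Rightarrow> real \<Rightarrow> real" where
  "ccf a b X Y X' Y' = (b^2*X*X' + a^2*Y*Y')^2/((b^2*X^2+a^2*Y^2)*(b^2*X'^2+a^2*Y'^2))"

lemma dpos: fixes a b X Y :: real assumes "a > 0" "b > 0" "X^2+Y^2=1" shows "b^2*X^2+a^2*Y^2 > 0"
proof (cases "X = 0")
  case True
  hence "Y \<noteq> 0" using assms(3) by auto
  thus ?thesis using assms by (simp add: add_nonneg_pos)
next
  case False thus ?thesis using assms by (simp add: add_pos_nonneg)
qed

lemma cc_complex:
  fixes a b s C :: real and Xj Yj Xk Yk :: real
  assumes ab: "a > 0" "b > 0" and uj: "Xj^2+Yj^2=1" and uk: "Xk^2+Yk^2=1"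
    and sC: "s = a^2+b^2" "C = a^2-b^2"
  shows "complex_of_real (ccf a b Xj Yj Xk Yk) =
     (NN (of_real s) (of_real C) (cz Xj Yj) (cz Xk Yk))^2 /
     (hh (of_real s) (of_real C) (cz Xj Yj) * hh (of_real s) (of_real C) (cz Xk Yk))"
proof -
  let ?zj = "cz Xj Yj" and ?zk = "cz Xk Yk"
  have n: "4 * ?zj * ?zk * of_real (b^2*Xj*Xk + a^2*Yj*Yk) = NN (of_real s) (of_real C) ?zj ?zk"
    using CV_real[OF uj uk sC] unfolding NN_def .
  have ej: "4 * ?zj * ?zj * of_real (b^2*Xj*Xj + a^2*Yj*Yj) = of_real s * (?zj^2 + ?zj^2) - of_real C * (?zj^2*?zj^2 + 1)"
    using CV_real[OF uj uj sC] .
  have hj: "4 * ?zj * ?zj * of_real (b^2*Xj^2 + a^2*Yj^2) = hh (of_real s) (of_real C) ?zj"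
  proof -
    have q: "b^2*Xj*Xj + a^2*Yj*Yj = b^2*Xj^2 + a^2*Yj^2" by (simp add: power2_eq_square)
    have "4 * ?zj * ?zj * of_real (b^2*Xj^2 + a^2*Yj^2) = of_real s * (?zj^2 + ?zj^2) - of_real C * (?zj^2*?zj^2 + 1)"
      using ej unfolding q .
    thus ?thesis unfolding hh_def by algebra
  qed
  have ek: "4 * ?zk * ?zk * of_real (b^2*Xk*Xk + a^2*Yk*Yk) = of_real s * (?zk^2 + ?zk^2) - of_real C * (?zk^2*?zk^2 + 1)"
    using CV_real[OF uk uk sC] .
  have hk: "4 * ?zk * ?zk * of_real (b^2*Xk^2 + a^2*Yk^2) = hh (of_real s) (of_real C) ?zk"
  proof -
    have q: "b^2*Xk*Xk + a^2*Yk*Yk = b^2*Xk^2 + a^2*Yk^2" by (simp add: power2_eq_square)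
    have "4 * ?zk * ?zk * of_real (b^2*Xk^2 + a^2*Yk^2) = of_real s * (?zk^2 + ?zk^2) - of_real C * (?zk^2*?zk^2 + 1)"
      using ek unfolding q .
    thus ?thesis unfolding hh_def by algebra
  qed
  have dj: "complex_of_real (b^2*Xj^2 + a^2*Yj^2) \<noteq> 0" using dpos[OF ab uj] by (simp only: of_real_eq_0_iff)
  have dk: "complex_of_real (b^2*Xk^2 + a^2*Yk^2) \<noteq> 0" using dpos[OF ab uk] by (simp only: of_real_eq_0_iff)
  have "complex_of_real (ccf a b Xj Yj Xk Yk) = (of_real (b^2*Xj*Xk + a^2*Yj*Yk))^2 /
     (of_real (b^2*Xj^2 + a^2*Yj^2) * of_real (b^2*Xk^2 + a^2*Yk^2))"
    unfolding ccf_def by (simp only: of_real_divide of_real_power of_real_mult)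
  also have "\<dots> = (NN (of_real s) (of_real C) ?zj ?zk)^2 / (hh (of_real s) (of_real C) ?zj * hh (of_real s) (of_real C) ?zk)"
    by (rule conv[OF n hj hk cz_nz[OF uj] cz_nz[OF uk] dj dk])
  finally show ?thesis .
qed

lemma hh_nz:
  fixes a b s C X Y :: real
  assumes ab: "a > 0" "b > 0" and u: "X^2+Y^2=1" and sC: "s = a^2+b^2" "C = a^2-b^2"
  shows "hh (of_real s) (of_real C) (cz X Y) \<noteq> 0"
proof -
  let ?z = "cz X Y"
  have q: "b^2*X*X + a^2*Y*Y = b^2*X^2 + a^2*Y^2" by (simp add: power2_eq_square)
  have "4 * ?z * ?z * of_real (b^2*X^2 + a^2*Y^2) = of_real s * (?z^2 + ?z^2) - of_real C * (?z^2*?z^2 + 1)"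
    using CV_real[OF u u sC] unfolding q .
  hence h: "4 * ?z * ?z * of_real (b^2*X^2 + a^2*Y^2) = hh (of_real s) (of_real C) ?z"
    unfolding hh_def by algebra
  have d: "complex_of_real (b^2*X^2 + a^2*Y^2) \<noteq> 0" using dpos[OF ab u] by (simp only: of_real_eq_0_iff)
  show ?thesis unfolding h[symmetric] using cz_nz[OF u] d by simp
qed


theorem mainTheorem10:
  fixes a b :: real and P1 P2 P3 :: point
  assumes "a > b" and "b > 0"
    and "three_periodic a b P1 P2 P3"
  shows "(let Q1 = outer_vertex a b P2 P3; Q2 = outer_vertex a b P3 P1;
              Q3 = outer_vertex a b P1 P2;
              S = cos (2 * vec_angle (vsub Q2 Q1) (vsub Q3 Q1))
                + cos (2 * vec_angle (vsub Q3 Q2) (vsub Q1 Q2))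
                + cos (2 * vec_angle (vsub Q1 Q3) (vsub Q2 Q3))
          in S = (a^2 + b^2) * (a^2 + b^2 - 2 * delta_const a b) / (a^2 - b^2)^2
           \<and> S = 3 - joach_J a b * perim_L a b)"
proof -
  have ab: "a > b" "b > 0" using assms by auto
  have a0: "a > 0" using assms by simp
  have an: "a \<noteq> 0" "b \<noteq> 0" using assms by auto
  define X1 where "X1 = fst P1 / a"
  define Y1 where "Y1 = snd P1 / b"
  define X2 where "X2 = fst P2 / a"
  define Y2 where "Y2 = snd P2 / b"
  define X3 where "X3 = fst P3 / a"
  define Y3 where "Y3 = snd P3 / b"
  have P1: "P1 = (a*X1, b*Y1)" unfolding X1_def Y1_def using an by simp
  have P2: "P2 = (a*X2, b*Y2)" unfolding X2_def Y2_def using an by simp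
  have P3: "P3 = (a*X3, b*Y3)" unfolding X3_def Y3_def using an by simp
  note tp = assms(3)[unfolded three_periodic_def]
  have u1: "X1^2+Y1^2=1" using tp P1 ell_unit an by metis
  have u2: "X2^2+Y2^2=1" using tp P2 ell_unit an by metis
  have u3: "X3^2+Y3^2=1" using tp P3 ell_unit an by metis
  have d12: "(X1,Y1) \<noteq> (X2,Y2)" using tp P1 P2 by auto
  have d13: "(X1,Y1) \<noteq> (X3,Y3)" using tp P1 P3 by auto
  have d23: "(X2,Y2) \<noteq> (X3,Y3)" using tp P2 P3 by auto
  have R1: "reflects_at a b (a*X3,b*Y3) (a*X1,b*Y1) (a*X2,b*Y2)" using tp P1 P2 P3 by simp
  have R2: "reflects_at a b (a*X1,b*Y1) (a*X2,b*Y2) (a*X3,b*Y3)" using tp P1 P2 P3 by simp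
  have r1: "mm X1 Y1 X3 Y3 / DD a b X1 Y1 X3 Y3 = mm X1 Y1 X2 Y2 / DD a b X1 Y1 X2 Y2"
    using refl_ratio[OF ab u1 u3 u2 _ _ R1] d12 d13 by auto
  have r2: "mm X2 Y2 X1 Y1 / DD a b X2 Y2 X1 Y1 = mm X2 Y2 X3 Y3 / DD a b X2 Y2 X3 Y3"
    using refl_ratio[OF ab u2 u1 u3 _ _ R2] d12 d23 by auto
  define J2 where "J2 = mm X1 Y1 X2 Y2 / DD a b X1 Y1 X2 Y2"
  have D12: "DD a b X1 Y1 X2 Y2 > 0" by (rule DD_pos[OF ab u1 u2])
  have D13: "DD a b X1 Y1 X3 Y3 > 0" by (rule DD_pos[OF ab u1 u3])
  have D23: "DD a b X2 Y2 X3 Y3 > 0" by (rule DD_pos[OF ab u2 u3])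
  have E12: "mm X1 Y1 X2 Y2 = J2 * DD a b X1 Y1 X2 Y2" unfolding J2_def using D12 by simp
  have j13: "J2 = mm X1 Y1 X3 Y3 / DD a b X1 Y1 X3 Y3" using r1 unfolding J2_def by simp
  have E13: "mm X1 Y1 X3 Y3 = J2 * DD a b X1 Y1 X3 Y3" using j13 D13 by simp
  have j23: "J2 = mm X2 Y2 X3 Y3 / DD a b X2 Y2 X3 Y3"
    using r2 unfolding J2_def mm_sym[of X2 Y2 X1 Y1] DD_sym[of a b X2 Y2 X1 Y1] .
  have E23: "mm X2 Y2 X3 Y3 = J2 * DD a b X2 Y2 X3 Y3" using j23 D23 by simp
  have J2pos: "J2 > 0" unfolding J2_def using mm_pos[OF u1 u2 d12] D12 by simp
  define s where "s = a^2+b^2"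
  define C where "C = a^2-b^2"
  have Cpos: "C > 0" unfolding C_def using ab by (simp add: power_strict_mono)
  have sC: "s - C = 2*b^2" unfolding s_def C_def by simp
  define e where "e = J2*C"
  define K where "K = 1 - J2*s"
  have epos: "e > 0" unfolding e_def using J2pos Cpos by simp
  have L12: "X1*X2+Y1*Y2 - e*(X1*X2-Y1*Y2) - K = 0"
    using E12 unfolding mm_def DD_def e_def K_def s_def C_def by algebra
  have L13: "X1*X3+Y1*Y3 - e*(X1*X3-Y1*Y3) - K = 0"
    using E13 unfolding mm_def DD_def e_def K_def s_def C_def by algebra
  have L23: "X2*X3+Y2*Y3 - e*(X2*X3-Y2*Y3) - K = 0"
    using E23 unfolding mm_def DD_def e_def K_def s_def C_def by algebra
  define z1 where "z1 = cz X1 Y1"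
  define z2 where "z2 = cz X2 Y2"
  define z3 where "z3 = cz X3 Y3"
  note F12 = Fz_real[OF u1 u2 L12, folded z1_def z2_def]
  note F13 = Fz_real[OF u1 u3 L13, folded z1_def z3_def]
  note F23 = Fz_real[OF u2 u3 L23, folded z2_def z3_def]
  have dz12: "z1 \<noteq> z2" using d12 cz_eq unfolding z1_def z2_def by metis
  have dz13: "z1 \<noteq> z3" using d13 cz_eq unfolding z1_def z3_def by metis
  have dz23: "z2 \<noteq> z3" using d23 cz_eq unfolding z2_def z3_def by metis
  have nz1: "z1 \<noteq> 0" unfolding z1_def by (rule cz_nz[OF u1])
  have nz2: "z2 \<noteq> 0" unfolding z2_def by (rule cz_nz[OF u2])
  have nz3: "z3 \<noteq> 0" unfolding z3_def by (rule cz_nz[OF u3])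
  have n1: "cmod z1 = 1" unfolding z1_def by (rule cz_norm[OF u1])
  have n2: "cmod z2 = 1" unfolding z2_def by (rule cz_norm[OF u2])
  have n3: "cmod z3 = 1" unfolding z3_def by (rule cz_norm[OF u3])
  from chain[OF F12 F13 F23 dz12 dz13 dz23 nz1]
  have S1: "z1+z2+z3 = - of_real e*z1*z2*z3" and S2: "z1*z2+z1*z3+z2*z3 = - of_real e"
    and KR: "2 * complex_of_real K = (of_real e)^2 - 1" by auto
  have "complex_of_real (2*K) = complex_of_real (e^2-1)" using KR by simp
  hence KR2: "2*K = e^2-1" by (simp only: of_real_eq_iff)
  have rel: "2*e*s = C*(3-e^2)" using KR2 unfolding e_def K_def by algebra
  have ne1: "e \<noteq> 1"
  proof
    assume "e = 1"
    hence "s = C" using rel Cpos by simp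
    thus False using sC ab by simp
  qed
  have sq4: "a^4 - a^2*b^2 + b^4 = ((s + C*e)/2)^2"
  proof -
    have "(s + C*e)^2 = s^2 + C*(2*e*s + C*e^2)" by algebra
    also have "\<dots> = s^2 + 3*C^2" using rel by (simp add: algebra_simps power2_eq_square)
    also have "\<dots> = 4*(a^4 - a^2*b^2 + b^4)" unfolding s_def C_def by algebra
    finally show ?thesis by (simp add: power_divide)
  qed
  have sCe: "s + C*e > 0" using sC ab Cpos epos by (smt (verit) mult_pos_pos zero_less_power)
  have dl: "delta_const a b = (s + C*e)/2"
    unfolding delta_const_def sq4 using sCe by simp
  have D23n: "X2*Y3 - X3*Y2 \<noteq> 0"
  proof
    assume h: "X2*Y3 - X3*Y2 = 0"
    have "z2^2 = z3^2" using sq_real[OF u2 u3 h] unfolding z2_def z3_def .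
    hence "(z2-z3)*(z2+z3) = 0" by algebra
    hence "z2 + z3 = 0" using dz23 by simp
    hence "z3 = -z2" by (simp add: add_eq_0_iff2)
    from anti[OF S1 nz1 this n2 epos] ne1 show False by simp
  qed
  have D31n: "X3*Y1 - X1*Y3 \<noteq> 0"
  proof
    assume h: "X3*Y1 - X1*Y3 = 0"
    have "z3^2 = z1^2" using sq_real[OF u3 u1 h] unfolding z3_def z1_def .
    hence "(z3-z1)*(z3+z1) = 0" by algebra
    hence "z3 + z1 = 0" using dz13 by simp
    hence "z1 = -z3" by (simp add: add_eq_0_iff)
    moreover have "z2+z3+z1 = - of_real e*z2*z3*z1" using S1 by (simp add: algebra_simps)
    ultimately show False using anti[OF _ nz2 _ n3 epos] ne1 by blast
  qed
  have D12n: "X1*Y2 - X2*Y1 \<noteq> 0"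
  proof
    assume h: "X1*Y2 - X2*Y1 = 0"
    have "z1^2 = z2^2" using sq_real[OF u1 u2 h] unfolding z1_def z2_def .
    hence "(z1-z2)*(z1+z2) = 0" by algebra
    hence "z1 + z2 = 0" using dz12 by simp
    hence "z2 = -z1" by (simp add: add_eq_0_iff2)
    moreover have "z3+z1+z2 = - of_real e*z3*z1*z2" using S1 by (simp add: algebra_simps)
    ultimately show False using anti[OF _ nz3 _ n1 epos] ne1 by blast
  qed
  obtain \<xi>1 \<eta>1 where Q1: "outer_vertex a b P2 P3 = (a*\<xi>1, b*\<eta>1)"
    and t12: "X2*\<xi>1 + Y2*\<eta>1 = 1" and t13: "X3*\<xi>1 + Y3*\<eta>1 = 1"
    using outer[OF an D23n] P2 P3 by metis
  obtain \<xi>2 \<eta>2 where Q2: "outer_vertex a b P3 P1 = (a*\<xi>2, b*\<eta>2)"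
    and t23: "X3*\<xi>2 + Y3*\<eta>2 = 1" and t21: "X1*\<xi>2 + Y1*\<eta>2 = 1"
    using outer[OF an D31n] P3 P1 by metis
  obtain \<xi>3 \<eta>3 where Q3: "outer_vertex a b P1 P2 = (a*\<xi>3, b*\<eta>3)"
    and t31: "X1*\<xi>3 + Y1*\<eta>3 = 1" and t32: "X2*\<xi>3 + Y2*\<eta>3 = 1"
    using outer[OF an D12n] P1 P2 by metis
  have q12: "(\<xi>2,\<eta>2) \<noteq> (\<xi>1,\<eta>1)"
  proof
    assume "(\<xi>2,\<eta>2) = (\<xi>1,\<eta>1)"
    hence "X1*\<xi>1 + Y1*\<eta>1 = 1" using t21 by simp
    thus False using no_common[OF u1 u2 u3 d12 d13 d23 _ t12 t13] by simp
  qed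
  have q13: "(\<xi>3,\<eta>3) \<noteq> (\<xi>1,\<eta>1)"
  proof
    assume "(\<xi>3,\<eta>3) = (\<xi>1,\<eta>1)"
    hence "X1*\<xi>1 + Y1*\<eta>1 = 1" using t31 by simp
    thus False using no_common[OF u1 u2 u3 d12 d13 d23 _ t12 t13] by simp
  qed
  have q23: "(\<xi>3,\<eta>3) \<noteq> (\<xi>2,\<eta>2)"
  proof
    assume "(\<xi>3,\<eta>3) = (\<xi>2,\<eta>2)"
    hence "X2*\<xi>2 + Y2*\<eta>2 = 1" using t32 by simp
    thus False using no_common[OF u1 u2 u3 d12 d13 d23 t21 _ t23] by simp
  qed
  have c1: "cos (2 * vec_angle (vsub (a*\<xi>2,b*\<eta>2) (a*\<xi>1,b*\<eta>1)) (vsub (a*\<xi>3,b*\<eta>3) (a*\<xi>1,b*\<eta>1)))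
      = 2 * ccf a b X3 Y3 X2 Y2 - 1"
    unfolding ccf_def by (rule corner[OF a0 ab(2) t13 t23 t12 t32 q12 q13 u3 u2])
  have c2: "cos (2 * vec_angle (vsub (a*\<xi>3,b*\<eta>3) (a*\<xi>2,b*\<eta>2)) (vsub (a*\<xi>1,b*\<eta>1) (a*\<xi>2,b*\<eta>2)))
      = 2 * ccf a b X1 Y1 X3 Y3 - 1"
    unfolding ccf_def by (rule corner[OF a0 ab(2) t21 t31 t23 t13 q23 q12[symmetric] u1 u3])
  have c3: "cos (2 * vec_angle (vsub (a*\<xi>1,b*\<eta>1) (a*\<xi>3,b*\<eta>3)) (vsub (a*\<xi>2,b*\<eta>2) (a*\<xi>3,b*\<eta>3)))
      = 2 * ccf a b X2 Y2 X1 Y1 - 1"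
    unfolding ccf_def by (rule corner[OF a0 ab(2) t32 t12 t31 t21 q13[symmetric] q23[symmetric] u2 u1])
  have sCdefs: "s = a^2+b^2" "C = a^2-b^2" using s_def C_def by auto
  define h1 where "h1 = hh (of_real s) (of_real C) z1"
  define h2 where "h2 = hh (of_real s) (of_real C) z2"
  define h3 where "h3 = hh (of_real s) (of_real C) z3"
  have k32: "complex_of_real (ccf a b X3 Y3 X2 Y2) = (NN (of_real s) (of_real C) z3 z2)^2/(h3*h2)"
    using cc_complex[OF a0 ab(2) u3 u2 sCdefs] unfolding h3_def h2_def z3_def z2_def .
  have k13: "complex_of_real (ccf a b X1 Y1 X3 Y3) = (NN (of_real s) (of_real C) z1 z3)^2/(h1*h3)"
    using cc_complex[OF a0 ab(2) u1 u3 sCdefs] unfolding h1_def h3_def z1_def z3_def .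
  have k21: "complex_of_real (ccf a b X2 Y2 X1 Y1) = (NN (of_real s) (of_real C) z2 z1)^2/(h2*h1)"
    using cc_complex[OF a0 ab(2) u2 u1 sCdefs] unfolding h1_def h2_def z1_def z2_def .
  have hnz: "h1 \<noteq> 0" "h2 \<noteq> 0" "h3 \<noteq> 0"
    unfolding h1_def h2_def h3_def z1_def z2_def z3_def
    using hh_nz[OF a0 ab(2) u1 sCdefs] hh_nz[OF a0 ab(2) u2 sCdefs] hh_nz[OF a0 ab(2) u3 sCdefs] by auto
  have relc: "2*complex_of_real e*of_real s = of_real C*(3-(of_real e)^2)"
  proof -
    have "complex_of_real (2*e*s) = complex_of_real (C*(3-e^2))" using rel by simp
    thus ?thesis by simp
  qed
  define N32 where "N32 = NN (of_real s) (of_real C) z3 z2"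
  define N13 where "N13 = NN (of_real s) (of_real C) z1 z3"
  define N21 where "N21 = NN (of_real s) (of_real C) z2 z1"
  have fn: "4*(N32^2*h1 + N13^2*h2 + N21^2*h3) = (3+(of_real e)^2)*h1*h2*h3"
    using fin[OF S1 S2 relc] unfolding N32_def N13_def N21_def h1_def h2_def h3_def .
  have "complex_of_real (ccf a b X3 Y3 X2 Y2 + ccf a b X1 Y1 X3 Y3 + ccf a b X2 Y2 X1 Y1)
      = N32^2/(h3*h2) + N13^2/(h1*h3) + N21^2/(h2*h1)"
    unfolding of_real_add k32 k13 k21 N32_def N13_def N21_def ..
  also have "\<dots> = (4*(N32^2*h1 + N13^2*h2 + N21^2*h3))/(4*h1*h2*h3)"
    using hnz by (simp add: field_simps)
  also have "\<dots> = ((3+(of_real e)^2)*h1*h2*h3)/(4*h1*h2*h3)" unfolding fn ..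
  also have "\<dots> = (3+(of_real e)^2)/4" using hnz by (simp add: field_simps)
  also have "\<dots> = complex_of_real ((3+e^2)/4)" by simp
  finally have csum: "ccf a b X3 Y3 X2 Y2 + ccf a b X1 Y1 X3 Y3 + ccf a b X2 Y2 X1 Y1 = (3+e^2)/4"
    by (simp only: of_real_eq_iff)
  have Sval: "(2 * ccf a b X3 Y3 X2 Y2 - 1) + (2 * ccf a b X1 Y1 X3 Y3 - 1) + (2 * ccf a b X2 Y2 X1 Y1 - 1) = (e^2-3)/2"
    using csum by simp
  have T1: "(a^2 + b^2) * (a^2 + b^2 - 2 * delta_const a b) / (a^2 - b^2)^2 = (e^2-3)/2"
  proof -
    have "(a^2 + b^2) * (a^2 + b^2 - 2 * delta_const a b) / (a^2 - b^2)^2 = s*(-(C*e))/C^2"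
    proof -
      have "s - 2*((s+C*e)/2) = -(C*e)" by (simp add: field_simps)
      thus ?thesis unfolding dl s_def[symmetric] C_def[symmetric] by simp
    qed
    also have "\<dots> = - (s*e)/C" using Cpos by (simp add: power2_eq_square)
    also have "\<dots> = (e^2-3)/2" using rel Cpos by (simp add: field_simps)
    finally show ?thesis .
  qed
  have T2: "3 - joach_J a b * perim_L a b = (e^2-3)/2"
  proof -
    have j: "joach_J a b = sqrt (C*e)/C"
      unfolding joach_J_def dl C_def[symmetric] using s_def by (simp add: algebra_simps)
    have ce: "(sqrt (C*e))^2 = C*e" using Cpos epos by simp
    have pL: "perim_L a b = 2*((s+C*e)/2 + s)*joach_J a b"
      unfolding perim_L_def dl s_def by (simp add: add.assoc)
    have jj: "joach_J a b * joach_J a b = e/C" unfolding j using ce Cpos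
      by (simp add: power2_eq_square)
    have "joach_J a b * perim_L a b = 2*((s+C*e)/2 + s)*(e/C)"
      unfolding pL jj[symmetric] by (simp add: algebra_simps)
    also have "\<dots> = (3*s + C*e)*e/C" using Cpos by (simp add: field_simps)
    finally have "joach_J a b * perim_L a b = (3*s + C*e)*e/C" .
    hence m: "C*(joach_J a b * perim_L a b) = (3*s + C*e)*e" using Cpos by (simp add: field_simps)
    have "C*(2*(joach_J a b * perim_L a b)) = C*(9-e^2)" using m rel by algebra
    hence "2*(joach_J a b * perim_L a b) = 9-e^2" using Cpos by simp
    thus ?thesis by simp
  qed
  show ?thesis
    unfolding Let_def Q1 Q2 Q3 c1 c2 c3 T1 T2 using Sval by simp
qed
end
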